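(* Let $\psi_1,\dots,\psi_N\in\mathbb{C}^{2^n}$ be unit vectors and $Y_1,\dots,Y_N\in\{-1,1\}$. Let $p\in[0,1/4)$ and let $C_1,\dots,C_N$ be i.i.d., independent of $(\psi_{1:N},Y_{1:N})$, with $\mathbb{P}\{C_i=0\}=1-3p$ and $\mathbb{P}\{C_i=j\}=p$ for $j=1,2,3$. Let $V_i=V_i^1\otimes\cdots\otimes V_i^n$ with $V_i^1=\sigma_{C_i}$ and $V_i^k$ ($k\ge2$) arbitrary (possibly random) $2\times 2$ unitaries, and set $\tilde\psi_i=V_i\psi_i$. Let $\ell:\mathbb{R}\to[0,\infty)$ be convex, monotonically nonincreasing, with $\ell(0)=1$. For a parametrized circuit $W(\theta)=W_1(\theta_1)\otimes\cdots\otimes W_n(\theta_n)$ ($\theta\in\mathbb{R}^k$, each $W_r(\theta_r)$ a $2\times2$ unitary) define $$m_\theta(\psi)=\langle\psi|W(\theta)^\dagger M_1W(\theta)|\psi\rangle-\tfrac12,\quad \hat R_N(\theta)=\frac1N\sum_{i=1}^N\ell\big(m_\theta(\psi_i)Y_i\big),\quad \tilde R_N(\theta)=\frac1N\sum_{i=1}^N\ell\big(m_\theta(\tilde\psi_i)Y_i\big),$$ and $\hat P_N(\theta)=\frac1N\sum_{i=1}^N\frac14\sum_{j=0}^{3}\ell\big(m_\theta((\sigma_j\otimes I_{2^{n-1}})\psi_i)\,Y_i\big)$. Then with $\lambda=\frac{4p}{1-4p}$, $$\mathbb{E}\big[\tilde R_N(\theta)\,\big|\,\psi_{1:N},Y_{1:N}\big]=(1-4p)\big[\hat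 R_N(\theta)+\lambda\,\hat P_N(\theta)\big],$$ and $$\hat P_N(\theta)\ \ge\ \frac1N\sum_{i=1}^N\frac{\ell\big(\tfrac13|m_\theta(\psi_i)|\big)+\ell\big(-\tfrac13|m_\theta(\psi_i)|\big)}{2}.$$
   Context: $\sigma_0=I_2$, $\sigma_1=\begin{pmatrix}0&1\\1&0\end{pmatrix}$, $\sigma_2=\begin{pmatrix}0&-i\\i&0\end{pmatrix}$, $\sigma_3=\begin{pmatrix}1&0\\0&-1\end{pmatrix}$ (Pauli matrices). $M_1=\begin{pmatrix}0&0\\0&1\end{pmatrix}\otimes I_{2^{n-1}}$, so $m_\theta(\psi)$ is the probability of measuring $|1\rangle$ on the first qubit of $W(\theta)\psi$, minus $1/2$. The conditional expectation is over $C_1,\dots,C_N$ (and any randomness in the $V_i^k$, $k\ge 2$). *)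

theory Defs
  imports "HOL-Probability.Probability" "Jordan_Normal_Form.Matrix"
begin

definition adj :: "complex mat \<Rightarrow> complex mat" where
  "adj A = mat (dim_col A) (dim_row A) (\<lambda>(i,j). cnj (A $$ (j,i)))"

definition unitary_mat :: "nat \<Rightarrow> complex mat \<Rightarrow> bool" where
  "unitary_mat d A \<longleftrightarrow> A \<in> carrier_mat d d \<and> adj A * A = 1\<^sub>m d \<and> A * adj A = 1\<^sub>m d"

(* Kronecker (tensor) product; the left factor is the most significant index *)
definition kron :: "complex mat \<Rightarrow> complex mat \<Rightarrow> complex mat" where
  "kron A B = mat (dim_row A * dim_row B) (dim_col A * dim_col B)
     (\<lambda>(i,j). A $$ (i div dim_row B, j div dim_col B) * B $$ (i mod dim_row B, j mod dim_col B))"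

definition tensor_list :: "complex mat list \<Rightarrow> complex mat" where
  "tensor_list Us = foldr kron Us (1\<^sub>m 1)"

(* Pauli matrices sigma_0 = I, sigma_1, sigma_2, sigma_3 (index > 3 : identity, never used a.s.) *)
definition pauli :: "nat \<Rightarrow> complex mat" where
  "pauli j = (if j = 1 then mat_of_rows_list 2 [[0, 1], [1, 0]]
              else if j = 2 then mat_of_rows_list 2 [[0, -\<i>], [\<i>, 0]]
              else if j = 3 then mat_of_rows_list 2 [[1, 0], [0, -1]]
              else 1\<^sub>m 2)"

definition M1 :: "nat \<Rightarrow> complex mat" where
  "M1 n = kron (mat_of_rows_list 2 [[0, 0], [0, 1]]) (1\<^sub>m (2 ^ (n - 1)))"

definition mval :: "nat \<Rightarrow> complex mat \<Rightarrow> complex vec \<Rightarrow> real" where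
  "mval n W \<psi> = Re (((adj W * M1 n * W) *\<^sub>v \<psi>) \<bullet>c \<psi>) - 1/2"

definition Rhat :: "(real \<Rightarrow> real) \<Rightarrow> nat \<Rightarrow> complex mat \<Rightarrow> nat \<Rightarrow> (nat \<Rightarrow> complex vec) \<Rightarrow> (nat \<Rightarrow> real) \<Rightarrow> real" where
  "Rhat loss n W N \<psi> Y = (1 / real N) * (\<Sum>i = 1..N. loss (mval n W (\<psi> i) * Y i))"

definition Phat :: "(real \<Rightarrow> real) \<Rightarrow> nat \<Rightarrow> complex mat \<Rightarrow> nat \<Rightarrow> (nat \<Rightarrow> complex vec) \<Rightarrow> (nat \<Rightarrow> real) \<Rightarrow> real" where
  "Phat loss n W N \<psi> Y = (1 / real N) * (\<Sum>i = 1..N. (1/4) *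
      (\<Sum>j = 0..3. loss (mval n W (kron (pauli j) (1\<^sub>m (2 ^ (n - 1))) *\<^sub>v \<psi> i) * Y i)))"

end

theory Submission
  imports Defs
begin

lemma sum_div_mod:
  fixes d b :: nat assumes "d > 0"
  shows "(\<Sum>k<b*d. g (k div d) (k mod d)) = (\<Sum>k1<b. \<Sum>k2<d. g k1 k2)"
proof -
  have "(\<Sum>k<b*d. g (k div d) (k mod d)) = (\<Sum>(k1,k2)\<in>{..<b}\<times>{..<d}. g k1 k2)"
  proof (rule sum.reindex_bij_witness[where i="\<lambda>(a,c). a*d+c" and j="\<lambda>k. (k div d, k mod d)"])
    fix k assume "k \<in> {..<b*d}" thus "(k div d, k mod d) \<in> {..<b}\<times>{..<d}"
      using assms by (auto simp: less_mult_imp_div_less)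
  next
    fix a assume "a \<in> {..<b}\<times>{..<d}" thus "(case a of (a,c) \<Rightarrow> a*d+c) \<in> {..<b*d}"
    proof (cases a)
      case (Pair x y)
      with \<open>a \<in> _\<close> have "x + 1 \<le> b" "y < d" by auto
      hence "x*d + y < (x+1)*d" by simp
      also have "\<dots> \<le> b*d" using \<open>x+1 \<le> b\<close> by (rule mult_right_mono) simp
      finally show ?thesis using Pair by simp
    qed
  qed (use assms in auto)
  also have "\<dots> = (\<Sum>k1<b. \<Sum>k2<d. g k1 k2)" by (simp add: sum.cartesian_product)
  finally show ?thesis .
qed

lemma dim_kron[simp]: "dim_row (kron A B) = dim_row A * dim_row B" "dim_col (kron A B) = dim_col A * dim_col B"
  by (auto simp: kron_def)

lemma index_kron[simp]: "i < dim_row A * dim_row B \<Longrightarrow> j < dim_col A * dim_col B \<Longrightarrow>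
  kron A B $$ (i,j) = A $$ (i div dim_row B, j div dim_col B) * B $$ (i mod dim_row B, j mod dim_col B)"
  by (auto simp: kron_def)

lemma kron_carrier: "A \<in> carrier_mat a b \<Longrightarrow> B \<in> carrier_mat c d \<Longrightarrow> kron A B \<in> carrier_mat (a*c) (b*d)"
  by auto

lemma dim_adj[simp]: "dim_row (adj A) = dim_col A" "dim_col (adj A) = dim_row A"
  by (auto simp: adj_def)

lemma index_adj[simp]: "i < dim_col A \<Longrightarrow> j < dim_row A \<Longrightarrow> adj A $$ (i,j) = cnj (A $$ (j,i))"
  by (auto simp: adj_def)

lemma adj_carrier: "A \<in> carrier_mat a b \<Longrightarrow> adj A \<in> carrier_mat b a" by auto

lemma div_lt: "(i::nat) < a * c \<Longrightarrow> i div c < a"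
  by (simp add: less_mult_imp_div_less)
lemma mod_lt: "(i::nat) < a * c \<Longrightarrow> i mod c < c"
  by (metis mod_less_divisor mult_0_right neq0_conv not_less_zero)

lemma kron_mult:
  assumes A: "A \<in> carrier_mat a b" and B: "B \<in> carrier_mat c d" and C: "C \<in> carrier_mat b e"
    and D: "D \<in> carrier_mat d f" and d: "d > 0"
  shows "kron A B * kron C D = kron (A*C) (B*D)"
proof (rule eq_matI)
  fix i j assume "i < dim_row (kron (A*C) (B*D))" "j < dim_col (kron (A*C) (B*D))"
  hence i: "i < a*c" and j: "j < e*f" using A B C D by auto
  have "(kron A B * kron C D) $$ (i,j) = (\<Sum>k<b*d. kron A B $$ (i,k) * kron C D $$ (k,j))"
    using A B C D i j by (simp add: scalar_prod_def atLeast0LessThan)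
  also have "\<dots> = (\<Sum>k<b*d. (A $$ (i div c, k div d) * B $$ (i mod c, k mod d)) *
        (C $$ (k div d, j div f) * D $$ (k mod d, j mod f)))"
    using A B C D i j by (intro sum.cong) auto
  also have "\<dots> = (\<Sum>k1<b. \<Sum>k2<d. (A $$ (i div c, k1) * B $$ (i mod c, k2)) *
        (C $$ (k1, j div f) * D $$ (k2, j mod f)))"
    by (rule sum_div_mod[OF d, where g = "\<lambda>k1 k2. (A $$ (i div c, k1) * B $$ (i mod c, k2)) *
        (C $$ (k1, j div f) * D $$ (k2, j mod f))"])
  also have "\<dots> = (\<Sum>k1<b. A $$ (i div c, k1) * C $$ (k1, j div f)) * (\<Sum>k2<d. B $$ (i mod c, k2) * D $$ (k2, j mod f))"
    by (simp add: sum_product mult_ac)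
  also have "\<dots> = kron (A*C) (B*D) $$ (i,j)"
    using A B C D i j div_lt[OF i] mod_lt[OF i] div_lt[OF j] mod_lt[OF j]
    by (simp add: scalar_prod_def atLeast0LessThan)
  finally show "(kron A B * kron C D) $$ (i,j) = kron (A*C) (B*D) $$ (i,j)" .
qed (use A B C D in auto)

lemma adj_kron: "adj (kron A B) = kron (adj A) (adj B)"
  by (rule eq_matI) (auto simp: div_lt mod_lt)

lemma kron_one: "a > 0 \<Longrightarrow> b > 0 \<Longrightarrow> kron (1\<^sub>m a) (1\<^sub>m b) = 1\<^sub>m (a*b)"
proof (rule eq_matI)
  fix i j assume ab: "a > 0" "b > 0" and "i < dim_row (1\<^sub>m (a*b) :: complex mat)" "j < dim_col (1\<^sub>m (a*b) :: complex mat)"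
  hence i: "i < a*b" and j: "j < a*b" by auto
  have "(i div b = j div b \<and> i mod b = j mod b) = (i = j)"
    by (metis div_mult_mod_eq)
  thus "kron (1\<^sub>m a) (1\<^sub>m b) $$ (i, j) = 1\<^sub>m (a * b) $$ (i, j)"
    using i j div_lt[OF i] mod_lt[OF i] div_lt[OF j] mod_lt[OF j] by auto
qed auto

lemma cscalar_adj:
  assumes A: "A \<in> carrier_mat r c" and x: "x \<in> carrier_vec r" and y: "y \<in> carrier_vec c"
  shows "x \<bullet>c (A *\<^sub>v y) = (adj A *\<^sub>v x) \<bullet>c y"
proof -
  have "x \<bullet>c (A *\<^sub>v y) = (\<Sum>i<r. x $ i * cnj (\<Sum>j<c. A $$ (i,j) * y $ j))"
    using A x y by (simp add: scalar_prod_def atLeast0LessThan)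
  also have "\<dots> = (\<Sum>i<r. \<Sum>j<c. x $ i * cnj (A $$ (i,j)) * cnj (y $ j))"
    by (simp add: sum_distrib_left mult_ac)
  also have "\<dots> = (\<Sum>j<c. \<Sum>i<r. x $ i * cnj (A $$ (i,j)) * cnj (y $ j))"
    by (rule sum.swap)
  also have "\<dots> = (\<Sum>j<c. (\<Sum>i<r. cnj (A $$ (i,j)) * x $ i) * cnj (y $ j))"
    by (simp add: sum_distrib_right sum_distrib_left mult_ac)
  also have "\<dots> = (adj A *\<^sub>v x) \<bullet>c y"
    using A x y by (simp add: scalar_prod_def atLeast0LessThan)
  finally show ?thesis .
qed

lemma adj_one[simp]: "adj (1\<^sub>m n) = 1\<^sub>m n"
  by (rule eq_matI) auto

lemma unitary_kron:
  assumes "unitary_mat a A" "unitary_mat b B" "a > 0" "b > 0"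
  shows "unitary_mat (a*b) (kron A B)"
proof -
  have A: "A \<in> carrier_mat a a" "adj A * A = 1\<^sub>m a" "A * adj A = 1\<^sub>m a"
   and B: "B \<in> carrier_mat b b" "adj B * B = 1\<^sub>m b" "B * adj B = 1\<^sub>m b"
    using assms unfolding unitary_mat_def by auto
  have aA: "adj A \<in> carrier_mat a a" and aB: "adj B \<in> carrier_mat b b" using A B by auto
  show ?thesis unfolding unitary_mat_def adj_kron
    using kron_mult[OF aA aB A(1) B(1) \<open>b>0\<close>] kron_mult[OF A(1) B(1) aA aB \<open>b>0\<close>] A B
      kron_one[OF \<open>a>0\<close> \<open>b>0\<close>] by auto
qed

lemma unitary_tensor_list:
  "(\<And>U. U \<in> set Us \<Longrightarrow> unitary_mat 2 U) \<Longrightarrow> unitary_mat (2 ^ length Us) (tensor_list Us)"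
proof (induction Us)
  case Nil
  show ?case by (simp add: tensor_list_def unitary_mat_def)
next
  case (Cons U Us)
  have "unitary_mat (2 * 2 ^ length Us) (kron U (tensor_list Us))"
    by (rule unitary_kron) (use Cons in auto)
  thus ?case by (simp add: tensor_list_def)
qed

lemma sum_2: "(\<Sum>k\<in>{0..<2::nat}. f k) = f 0 + f 1"
  by (simp add: numeral_2_eq_2)

lemma less2: "(i::nat) < 2 \<longleftrightarrow> i = 0 \<or> i = 1" by auto

lemma pauli_carrier: "pauli j \<in> carrier_mat 2 2"
  by (auto simp: pauli_def mat_of_rows_list_def)

lemma pauli_entries:
  "pauli 0 = mat 2 2 (\<lambda>(i,j). if i = j then 1 else 0)"
  "pauli 1 = mat 2 2 (\<lambda>(i,j). if i = j then 0 else 1)"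
  "pauli 2 = mat 2 2 (\<lambda>(i,j). if i = j then 0 else if i = 0 then -\<i> else \<i>)"
  "pauli 3 = mat 2 2 (\<lambda>(i,j). if i = j then (if i = 0 then 1 else -1) else 0)"
  by (auto simp: pauli_def mat_of_rows_list_def less2 intro!: eq_matI)

lemma pauli_unitary: "unitary_mat 2 (pauli j)"
proof -
  have "j = 1 \<or> j = 2 \<or> j = 3 \<or> pauli j = 1\<^sub>m 2" by (auto simp: pauli_def)
  thus ?thesis
    by (elim disjE; simp only: pauli_entries; auto simp: unitary_mat_def scalar_prod_def sum_2 less2 intro!: eq_matI)
qed

lemma ii_mult[simp]: "\<i> * a * \<i> = - (a::complex)"
  by (metis complex_i_mult_minus mult.commute mult.left_commute)

lemma pauli_twirl:
  assumes A: "A \<in> carrier_mat 2 2"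
  shows "adj (pauli 0) * A * pauli 0 + adj (pauli 1) * A * pauli 1 + adj (pauli 2) * A * pauli 2
     + adj (pauli 3) * A * pauli 3 = (2 * (A $$ (0,0) + A $$ (1,1))) \<cdot>\<^sub>m 1\<^sub>m 2"
  using A by (simp only: pauli_entries) (auto simp: scalar_prod_def sum_2 less2 intro!: eq_matI)

lemma conj_kron:
  assumes U: "U \<in> carrier_mat 2 2" and U': "unitary_mat d U'" and A: "A \<in> carrier_mat 2 2" and d: "d > 0"
  shows "adj (kron U U') * kron A (1\<^sub>m d) * kron U U' = kron (adj U * A * U) (1\<^sub>m d)"
proof -
  have U'c: "U' \<in> carrier_mat d d" "adj U' * U' = 1\<^sub>m d" using U' unfolding unitary_mat_def by auto
  have aU: "adj U \<in> carrier_mat 2 2" "adj U' \<in> carrier_mat d d" using U U'c by auto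
  have "adj (kron U U') * kron A (1\<^sub>m d) = kron (adj U * A) (adj U' * 1\<^sub>m d)"
    unfolding adj_kron by (rule kron_mult[OF aU A one_carrier_mat d])
  also have "adj U' * 1\<^sub>m d = adj U'" using aU(2) by (rule right_mult_one_mat)
  finally have "adj (kron U U') * kron A (1\<^sub>m d) * kron U U' = kron (adj U * A) (adj U') * kron U U'" by simp
  also have "\<dots> = kron (adj U * A * U) (adj U' * U')"
    by (rule kron_mult[OF mult_carrier_mat[OF aU(1) A] aU(2) U U'c(1) d])
  finally show ?thesis using U'c by simp
qed

lemma cscalar_conj:
  assumes K: "K \<in> carrier_mat N N" and U: "U \<in> carrier_mat N N" and x: "x \<in> carrier_vec N"
  shows "(K *\<^sub>v (U *\<^sub>v x)) \<bullet>c (U *\<^sub>v x) = ((adj U * K * U) *\<^sub>v x) \<bullet>c x"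
proof -
  have "(K *\<^sub>v (U *\<^sub>v x)) \<bullet>c (U *\<^sub>v x) = (adj U *\<^sub>v (K *\<^sub>v (U *\<^sub>v x))) \<bullet>c x"
    by (rule cscalar_adj[OF U _ x]) (use K U x in simp)
  also have "adj U *\<^sub>v (K *\<^sub>v (U *\<^sub>v x)) = (adj U * K * U) *\<^sub>v x"
  proof -
    have aU: "adj U \<in> carrier_mat N N" using U by auto
    have aK: "adj U * K \<in> carrier_mat N N" using aU K by simp
    have "(adj U * K * U) *\<^sub>v x = (adj U * K) *\<^sub>v (U *\<^sub>v x)"
      by (rule assoc_mult_mat_vec[OF aK U x])
    also have "\<dots> = adj U *\<^sub>v (K *\<^sub>v (U *\<^sub>v x))"
      by (rule assoc_mult_mat_vec[OF aU K]) (use U x in simp)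
    finally show ?thesis by simp
  qed
  finally show ?thesis .
qed

lemma unitary_one: "unitary_mat d (1\<^sub>m d)" by (simp add: unitary_mat_def)

lemma kron_add: "A \<in> carrier_mat a b \<Longrightarrow> B \<in> carrier_mat a b \<Longrightarrow> kron (A + B) C = kron A C + kron B C"
  by (rule eq_matI) (auto simp: div_lt distrib_right)

lemma G_add:
  assumes A: "A \<in> carrier_mat 2 2" and B: "B \<in> carrier_mat 2 2" and x: "x \<in> carrier_vec (2*d)"
  shows "Re ((kron (A + B) (1\<^sub>m d) *\<^sub>v x) \<bullet>c x) = Re ((kron A (1\<^sub>m d) *\<^sub>v x) \<bullet>c x) + Re ((kron B (1\<^sub>m d) *\<^sub>v x) \<bullet>c x)"
proof -
  have kA: "kron A (1\<^sub>m d) \<in> carrier_mat (2*d) (2*d)" and kB: "kron B (1\<^sub>m d) \<in> carrier_mat (2*d) (2*d)"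
    using A B by auto
  have "kron (A + B) (1\<^sub>m d) *\<^sub>v x = kron A (1\<^sub>m d) *\<^sub>v x + kron B (1\<^sub>m d) *\<^sub>v x"
    unfolding kron_add[OF A B] by (rule add_mult_distrib_mat_vec[OF kA kB x])
  moreover have "(kron A (1\<^sub>m d) *\<^sub>v x + kron B (1\<^sub>m d) *\<^sub>v x) \<bullet>c x = (kron A (1\<^sub>m d) *\<^sub>v x) \<bullet>c x + (kron B (1\<^sub>m d) *\<^sub>v x) \<bullet>c x"
    by (rule add_scalar_prod_distrib[of _ "2*d"]) (use kA kB x in auto)
  ultimately show ?thesis by simp
qed

lemma G_scalar:
  assumes x: "x \<in> carrier_vec (2*d)" and d: "d > 0"
  shows "(kron (c \<cdot>\<^sub>m 1\<^sub>m 2) (1\<^sub>m d) *\<^sub>v x) \<bullet>c x = c * (x \<bullet>c x)"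
proof -
  have "kron (c \<cdot>\<^sub>m 1\<^sub>m 2) (1\<^sub>m d) = c \<cdot>\<^sub>m 1\<^sub>m (2*d)"
  proof (rule eq_matI)
    fix i j assume "i < dim_row (c \<cdot>\<^sub>m 1\<^sub>m (2*d) :: complex mat)" "j < dim_col (c \<cdot>\<^sub>m 1\<^sub>m (2*d) :: complex mat)"
    hence i: "i < 2*d" and j: "j < 2*d" by auto
    have "(i div d = j div d \<and> i mod d = j mod d) = (i = j)"
      by (metis div_mult_mod_eq)
    thus "kron (c \<cdot>\<^sub>m 1\<^sub>m 2) (1\<^sub>m d) $$ (i, j) = (c \<cdot>\<^sub>m 1\<^sub>m (2*d)) $$ (i, j)"
      using i j div_lt[OF i] mod_lt[OF i] div_lt[OF j] mod_lt[OF j] by auto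
  qed auto
  moreover have "(c \<cdot>\<^sub>m 1\<^sub>m (2*d)) *\<^sub>v x = c \<cdot>\<^sub>v x"
    using x by (intro eq_vecI) auto
  ultimately show ?thesis using x by simp
qed

definition E1 :: "complex mat" where "E1 = mat_of_rows_list 2 [[0, 0], [0, 1]]"

lemma E1_carrier: "E1 \<in> carrier_mat 2 2" by (auto simp: E1_def mat_of_rows_list_def)

lemma trace_A:
  assumes W: "unitary_mat 2 W1"
  shows "(adj W1 * E1 * W1) $$ (0,0) + (adj W1 * E1 * W1) $$ (1,1) = 1"
proof -
  have Wc: "W1 \<in> carrier_mat 2 2" and WW: "W1 * adj W1 = 1\<^sub>m 2" using W unfolding unitary_mat_def by auto
  have "(W1 * adj W1) $$ (1,1) = 1" using WW by simp
  hence "W1 $$ (1,0) * cnj (W1 $$ (1,0)) + W1 $$ (1,1) * cnj (W1 $$ (1,1)) = 1"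
    using Wc by (simp add: scalar_prod_def sum_2)
  thus ?thesis using Wc
    by (simp add: E1_def mat_of_rows_list_def scalar_prod_def sum_2 mult_ac)
qed

lemma twirl_sum:
  assumes A: "A \<in> carrier_mat 2 2" and tr: "A $$ (0,0) + A $$ (1,1) = 1"
    and x: "x \<in> carrier_vec (2*d)" and xx: "x \<bullet>c x = 1" and d: "d > 0"
  shows "(\<Sum>j = 0..3. Re ((kron (adj (pauli j) * A * pauli j) (1\<^sub>m d) *\<^sub>v x) \<bullet>c x)) = 2"
proof -
  let ?M = "\<lambda>j. adj (pauli j) * A * pauli j"
  let ?G = "\<lambda>B. Re ((kron B (1\<^sub>m d) *\<^sub>v x) \<bullet>c x)"
  have M: "?M j \<in> carrier_mat 2 2" for j using A pauli_carrier[of j] by (auto simp: adj_carrier)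
  have "{0..3::nat} = {0,1,2,3}" by auto
  hence "(\<Sum>j = 0..3. ?G (?M j)) = ?G (?M 0) + ?G (?M 1) + ?G (?M 2) + ?G (?M 3)" by simp
  also have "\<dots> = ?G (?M 0 + ?M 1 + ?M 2 + ?M 3)"
  proof -
    have a1: "?M 0 + ?M 1 \<in> carrier_mat 2 2" using M by simp
    have a2: "?M 0 + ?M 1 + ?M 2 \<in> carrier_mat 2 2" using M by simp
    show ?thesis using G_add[OF M M x, of 0 1] G_add[OF a1 M x, of 2] G_add[OF a2 M x, of 3] by simp
  qed
  also have "?M 0 + ?M 1 + ?M 2 + ?M 3 = 2 \<cdot>\<^sub>m 1\<^sub>m 2"
    using pauli_twirl[OF A] tr by (simp only: mult_2 flip: distrib_left) simp
  also have "?G (2 \<cdot>\<^sub>m 1\<^sub>m 2) = 2" using G_scalar[OF x d] xx by simp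
  finally show ?thesis .
qed

lemma integral_by_C:
  fixes g :: "'w \<Rightarrow> real" and f :: "nat \<Rightarrow> real" and c :: "'w \<Rightarrow> nat"
  assumes P: "prob_space M" and Cm: "c \<in> measurable M (count_space UNIV)"
    and mj: "\<And>j. j \<in> {1,2,3} \<Longrightarrow> measure M {\<omega> \<in> space M. c \<omega> = j} = p"
    and eq: "\<And>\<omega>. \<omega> \<in> space M \<Longrightarrow> g \<omega> = f (c \<omega>)"
    and ff: "\<And>k. k \<notin> {1,2,3} \<Longrightarrow> f k = f 0"
  shows "integrable M g \<and> integral\<^sup>L M g = (1 - 3*p) * f 0 + p * (f 1 + f 2 + f 3)"
proof -
  interpret prob_space M by (rule P)
  define S where "S j = {\<omega> \<in> space M. c \<omega> = j}" for j
  have S: "S j \<in> sets M" for j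
  proof -
    have "c -` {j} \<inter> space M \<in> sets M" using measurable_sets[OF Cm] by simp
    moreover have "c -` {j} \<inter> space M = S j" by (auto simp: S_def)
    ultimately show ?thesis by simp
  qed
  have Sfin: "emeasure M (S j) < \<infinity>" for j by (simp add: less_top[symmetric])
  define h where "h \<omega> = f 0 + (f 1 - f 0) * indicator (S 1) \<omega> + (f 2 - f 0) * indicator (S 2) \<omega>
      + (f 3 - f 0) * indicator (S 3) \<omega>" for \<omega>
  have gh: "g \<omega> = h \<omega>" if "\<omega> \<in> space M" for \<omega>
  proof -
    consider "c \<omega> = 1" | "c \<omega> = 2" | "c \<omega> = 3" | "c \<omega> \<notin> {1,2,3}" by auto
    thus ?thesis
      by cases (use that eq[OF that] ff[of "c \<omega>"] in \<open>auto simp: h_def S_def indicator_def\<close>)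
  qed
  have ih: "integrable M h" unfolding h_def
    using S Sfin by simp
  have ig: "integrable M g" using ih gh Bochner_Integration.integrable_cong[of M M g h] by auto
  have "integral\<^sup>L M g = integral\<^sup>L M h" using gh by (intro Bochner_Integration.integral_cong) auto
  also have "\<dots> = f 0 + (f 1 - f 0) * measure M (S 1) + (f 2 - f 0) * measure M (S 2) + (f 3 - f 0) * measure M (S 3)"
    unfolding h_def using S Sfin
    by (simp add: integral_add integrable_add integrable_mult_right integrable_indicator prob_space Int_absorb2 sets.sets_into_space)
  also have "\<dots> = (1 - 3*p) * f 0 + p * (f 1 + f 2 + f 3)"
    using mj[of 1] mj[of 2] mj[of 3] by (simp add: S_def algebra_simps)
  finally show ?thesis using ig by simp
qed

lemma conv_t:
  assumes "convex_on UNIV (L::real \<Rightarrow> real)" "0 \<le> t" "t \<le> 1"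
  shows "L ((1 - t) * u + t * v) \<le> (1 - t) * L u + t * L v"
  using convex_onD[OF assms(1), of t u v] assms(2,3) by simp

lemma loss_ineq:
  fixes L :: "real \<Rightarrow> real"
  assumes cv: "convex_on UNIV L" and sum0: "m0 + m1 + m2 + m3 = 0" and y: "y \<in> {-1, 1}"
  shows "(1/4) * (L (m0*y) + L (m1*y) + L (m2*y) + L (m3*y)) \<ge> (L ((1/3) * \<bar>m0\<bar>) + L (- (1/3) * \<bar>m0\<bar>)) / 2"
proof -
  define x1 x2 x3 x0 where "x1 = m1*y" "x2 = m2*y" "x3 = m3*y" "x0 = m0*y"
  have s: "x1 + x2 + x3 = - x0" using sum0 unfolding x1_x2_x3_x0_def by (simp add: algebra_simps)
    (metis add.assoc add_eq_0_iff distrib_right mult_minus_left)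
  have a: "\<bar>x0\<bar> = \<bar>m0\<bar>" using y unfolding x1_x2_x3_x0_def by (auto simp: abs_mult)
  have j2: "L ((x1 + x2)/2) \<le> (L x1 + L x2)/2"
    using conv_t[OF cv, of "1/2" x1 x2] by (simp add: field_simps)
  have j3: "L ((1 - 1/3) * ((x1 + x2)/2) + (1/3) * x3) \<le> (1 - 1/3) * L ((x1 + x2)/2) + (1/3) * L x3"
    by (rule conv_t[OF cv]) auto
  have "(1 - 1/3) * ((x1 + x2)/2) + (1/3) * x3 = - x0 / 3" using s by (simp add: field_simps)
  hence J: "L x1 + L x2 + L x3 \<ge> 3 * L (- x0 / 3)" using j2 j3 by simp
  show ?thesis
  proof (cases "x0 \<ge> 0")
    case True
    hence ax: "\<bar>m0\<bar> = x0" using a by simp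
    have "L ((1 - 1/2) * x0 + (1/2) * (- x0/3)) \<le> (1 - 1/2) * L x0 + (1/2) * L (- x0/3)"
      by (rule conv_t[OF cv]) auto
    moreover have "(1 - 1/2) * x0 + (1/2) * (- x0/3) = (1/3) * x0" by simp
    ultimately show ?thesis using J ax unfolding x1_x2_x3_x0_def by (simp add: field_simps)
  next
    case False
    hence ax: "\<bar>m0\<bar> = - x0" using a by simp
    have "L ((1 - 1/2) * x0 + (1/2) * (- x0/3)) \<le> (1 - 1/2) * L x0 + (1/2) * L (- x0/3)"
      by (rule conv_t[OF cv]) auto
    moreover have "(1 - 1/2) * x0 + (1/2) * (- x0/3) = - (1/3) * (- x0)" by simp
    ultimately show ?thesis using J ax unfolding x1_x2_x3_x0_def by (simp add: field_simps)
  qed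
qed

theorem theorem3:
  fixes M :: "'w measure" and n N :: nat and p :: real
    and \<psi> :: "nat \<Rightarrow> complex vec" and Y :: "nat \<Rightarrow> real"
    and C :: "nat \<Rightarrow> 'w \<Rightarrow> nat"
    and V :: "nat \<Rightarrow> nat \<Rightarrow> 'w \<Rightarrow> complex mat"
    and loss :: "real \<Rightarrow> real"
    and Wc :: "nat \<Rightarrow> 'p \<Rightarrow> complex mat" and \<theta> :: 'p
  assumes n: "n \<ge> 1"
    and psi: "\<And>i. i \<in> {1..N} \<Longrightarrow> \<psi> i \<in> carrier_vec (2 ^ n) \<and> \<psi> i \<bullet>c \<psi> i = 1"
    and Y: "\<And>i. i \<in> {1..N} \<Longrightarrow> Y i \<in> {-1, 1}"
    and p: "0 \<le> p" "p < 1/4"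
    and P: "prob_space M"
    and C_meas: "\<And>i. i \<in> {1..N} \<Longrightarrow> C i \<in> measurable M (count_space UNIV)"
    and C_indep: "prob_space.indep_vars M (\<lambda>_. count_space UNIV) C {1..N}"
    and C_dist0: "\<And>i. i \<in> {1..N} \<Longrightarrow> measure M {\<omega> \<in> space M. C i \<omega> = 0} = 1 - 3 * p"
    and C_distj: "\<And>i j. i \<in> {1..N} \<Longrightarrow> j \<in> {1, 2, 3} \<Longrightarrow>
                    measure M {\<omega> \<in> space M. C i \<omega> = j} = p"
    and V_unit: "\<And>i k \<omega>. i \<in> {1..N} \<Longrightarrow> k \<in> {2..n} \<Longrightarrow> \<omega> \<in> space M \<Longrightarrow>
                    unitary_mat 2 (V i k \<omega>)"
    and W_unit: "\<And>r. r \<in> {1..n} \<Longrightarrow> unitary_mat 2 (Wc r \<theta>)"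
    and l_nonneg: "\<And>x. loss x \<ge> 0"
    and l_convex: "convex_on UNIV loss"
    and l_mono: "antimono loss"
    and l_0: "loss 0 = 1"
  shows "let W = tensor_list (map (\<lambda>r. Wc r \<theta>) [1..<n+1]);
             Vt = (\<lambda>i \<omega>. tensor_list (pauli (C i \<omega>) # map (\<lambda>k. V i k \<omega>) [2..<n+1]));
             lam = 4 * p / (1 - 4 * p)
         in (\<integral>\<omega>. Rhat loss n W N (\<lambda>i. Vt i \<omega> *\<^sub>v \<psi> i) Y \<partial>M)
              = (1 - 4 * p) * (Rhat loss n W N \<psi> Y + lam * Phat loss n W N \<psi> Y)
          \<and> Phat loss n W N \<psi> Y \<ge> (1 / real N) * (\<Sum>i = 1..N.
                (loss ((1/3) * \<bar>mval n W (\<psi> i)\<bar>) + loss (- (1/3) * \<bar>mval n W (\<psi> i)\<bar>)) / 2)"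
proof -
  define d where "d = (2::nat) ^ (n - 1)"
  have d: "d > 0" by (simp add: d_def)
  have d2: "2 * d = 2 ^ n" using n unfolding d_def by (cases n) auto
  define W1 where "W1 = Wc 1 \<theta>"
  define W' where "W' = tensor_list (map (\<lambda>r. Wc r \<theta>) [2..<n+1])"
  have "[1..<n+1] = 1 # [Suc 1..<n+1]" by (rule upt_conv_Cons) (use n in simp)
  hence "[1..<n+1] = 1 # [2..<n+1]" by (simp only: Suc_1)
  hence Weq: "tensor_list (map (\<lambda>r. Wc r \<theta>) [1..<n+1]) = kron W1 W'"
    by (simp add: tensor_list_def W1_def W'_def)
  have W1u: "unitary_mat 2 W1" unfolding W1_def using W_unit[of 1] n by simp
  have W1c: "W1 \<in> carrier_mat 2 2" using W1u unfolding unitary_mat_def by simp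
  have W'u: "unitary_mat d W'"
  proof -
    have "unitary_mat (2 ^ length (map (\<lambda>r. Wc r \<theta>) [2..<n+1])) W'"
      unfolding W'_def by (rule unitary_tensor_list) (use W_unit in auto)
    thus ?thesis by (simp add: d_def del: upt_Suc)
  qed
  have M1eq: "M1 n = kron E1 (1\<^sub>m d)" by (simp add: M1_def E1_def d_def)
  define A where "A = adj W1 * E1 * W1"
  have Ac: "A \<in> carrier_mat 2 2" unfolding A_def using W1c E1_carrier by (auto simp: adj_carrier)
  have trA: "A $$ (0,0) + A $$ (1,1) = 1" unfolding A_def by (rule trace_A[OF W1u])
  have KW: "adj (kron W1 W') * M1 n * kron W1 W' = kron A (1\<^sub>m d)"
    unfolding M1eq A_def by (rule conj_kron[OF W1c W'u E1_carrier d])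
  have Kc: "kron A (1\<^sub>m d) \<in> carrier_mat (2*d) (2*d)" using Ac by auto
  have mv: "mval n (kron W1 W') (kron (pauli c) V' *\<^sub>v x)
      = Re ((kron (adj (pauli c) * A * pauli c) (1\<^sub>m d) *\<^sub>v x) \<bullet>c x) - 1/2"
    if V': "unitary_mat d V'" and x: "x \<in> carrier_vec (2*d)" for c V' x
  proof -
    have V'c: "V' \<in> carrier_mat d d" using V' unfolding unitary_mat_def by simp
    have Uc: "kron (pauli c) V' \<in> carrier_mat (2*d) (2*d)" using pauli_carrier[of c] V'c by auto
    show ?thesis unfolding mval_def KW cscalar_conj[OF Kc Uc x] conj_kron[OF pauli_carrier V' Ac d] ..
  qed
  have p0: "kron (pauli 0) (1\<^sub>m d) *\<^sub>v x = x" if "x \<in> carrier_vec (2*d)" for x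
  proof -
    have "pauli 0 = 1\<^sub>m 2" by (simp add: pauli_def)
    hence "kron (pauli 0) (1\<^sub>m d) = 1\<^sub>m (2*d)" using kron_one[of 2 d] d by simp
    thus ?thesis using that by simp
  qed
  have psic: "\<psi> i \<in> carrier_vec (2*d)" if "i \<in> {1..N}" for i using psi[OF that] d2 by simp
  define f where "f i j = loss (mval n (kron W1 W') (kron (pauli j) (1\<^sub>m (2 ^ (n - 1))) *\<^sub>v \<psi> i) * Y i)" for i j
  have f0: "f i 0 = loss (mval n (kron W1 W') (\<psi> i) * Y i)" if "i \<in> {1..N}" for i
    unfolding f_def d_def[symmetric] p0[OF psic[OF that]] ..
  define Vt where "Vt i \<omega> = tensor_list (map (\<lambda>k. V i k \<omega>) [2..<n+1])" for i \<omega>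
  have Vtu: "unitary_mat d (Vt i \<omega>)" if "i \<in> {1..N}" "\<omega> \<in> space M" for i \<omega>
  proof -
    have "unitary_mat (2 ^ length (map (\<lambda>k. V i k \<omega>) [2..<n+1])) (Vt i \<omega>)"
      unfolding Vt_def by (rule unitary_tensor_list) (use V_unit that in auto)
    thus ?thesis by (simp add: d_def del: upt_Suc)
  qed
  define g where "g i \<omega> = loss (mval n (kron W1 W') (kron (pauli (C i \<omega>)) (Vt i \<omega>) *\<^sub>v \<psi> i) * Y i)" for i \<omega>
  have gi: "integrable M (g i) \<and> integral\<^sup>L M (g i) = (1 - 3*p) * f i 0 + p * (f i 1 + f i 2 + f i 3)"
    if i: "i \<in> {1..N}" for i
  proof (rule integral_by_C[OF P C_meas[OF i]])
    show "measure M {\<omega> \<in> space M. C i \<omega> = j} = p" if "j \<in> {1,2,3}" for j using C_distj[OF i that] .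
    show "g i \<omega> = f i (C i \<omega>)" if "\<omega> \<in> space M" for \<omega>
      unfolding g_def f_def d_def[symmetric] mv[OF Vtu[OF i that] psic[OF i]] mv[OF unitary_one psic[OF i]] ..
    show "f i k = f i 0" if "k \<notin> {1,2,3}" for k
    proof -
      have "pauli k = pauli 0" using that by (simp add: pauli_def)
      thus ?thesis by (simp add: f_def)
    qed
  qed
  have part1: "(\<integral>\<omega>. (1 / real N) * (\<Sum>i = 1..N. g i \<omega>) \<partial>M)
      = (1 - 4 * p) * ((1 / real N) * (\<Sum>i = 1..N. f i 0) + 4 * p / (1 - 4 * p) *
           ((1 / real N) * (\<Sum>i = 1..N. (1/4) * (\<Sum>j = 0..3. f i j))))"
  proof -
    have "(\<integral>\<omega>. (1 / real N) * (\<Sum>i = 1..N. g i \<omega>) \<partial>M) = (1 / real N) * (\<Sum>i = 1..N. integral\<^sup>L M (g i))"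
      using gi by (simp add: integral_sum)
    also have "\<dots> = (1 / real N) * (\<Sum>i = 1..N. (1 - 4*p) * f i 0 + 4 * p * ((1/4) * (\<Sum>j = 0..3. f i j)))"
    proof -
      have "{0..3::nat} = {0,1,2,3}" by auto
      thus ?thesis using gi by (intro arg_cong[where f = "\<lambda>x. _ * x"] sum.cong) (auto simp: algebra_simps)
    qed
    also have "\<dots> = (1 - 4 * p) * ((1 / real N) * (\<Sum>i = 1..N. f i 0)) + 4 * p *
           ((1 / real N) * (\<Sum>i = 1..N. (1/4) * (\<Sum>j = 0..3. f i j)))"
    proof -
      have "(\<Sum>i = 1..N. (1 - 4*p) * f i 0 + 4 * p * ((1/4) * (\<Sum>j = 0..3. f i j)))
          = (1 - 4*p) * (\<Sum>i = 1..N. f i 0) + 4 * p * (\<Sum>i = 1..N. (1/4) * (\<Sum>j = 0..3. f i j))"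
        by (simp only: sum.distrib sum_distrib_left)
      moreover have "(c::real) * (a * X + b * Y) = a * (c * X) + b * (c * Y)" for a b c X Y
        by (simp add: algebra_simps)
      ultimately show ?thesis by simp
    qed
    also have "\<dots> = (1 - 4 * p) * ((1 / real N) * (\<Sum>i = 1..N. f i 0) + 4 * p / (1 - 4 * p) *
           ((1 / real N) * (\<Sum>i = 1..N. (1/4) * (\<Sum>j = 0..3. f i j))))"
    proof -
      have l: "(1 - 4*p) * (4 * p / (1 - 4 * p)) = 4 * p" using p by simp
      have "(1 - 4*p) * (X + 4 * p / (1 - 4 * p) * Y) = (1 - 4*p) * X + 4 * p * Y" for X Y
        unfolding distrib_left mult.assoc[symmetric] l ..
      thus ?thesis by presburger
    qed
    finally show ?thesis .
  qed
  have part2: "(1/4) * (\<Sum>j = 0..3. f i j) \<ge> (loss ((1/3) * \<bar>mval n (kron W1 W') (\<psi> i)\<bar>)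
      + loss (- (1/3) * \<bar>mval n (kron W1 W') (\<psi> i)\<bar>)) / 2" if i: "i \<in> {1..N}" for i
  proof -
    define m where "m j = mval n (kron W1 W') (kron (pauli j) (1\<^sub>m d) *\<^sub>v \<psi> i)" for j
    have mj: "m j = Re ((kron (adj (pauli j) * A * pauli j) (1\<^sub>m d) *\<^sub>v \<psi> i) \<bullet>c \<psi> i) - 1/2" for j
      unfolding m_def by (rule mv[OF unitary_one psic[OF i]])
    have "(\<Sum>j = 0..3. m j) = (\<Sum>j = 0..3. Re ((kron (adj (pauli j) * A * pauli j) (1\<^sub>m d) *\<^sub>v \<psi> i) \<bullet>c \<psi> i)) - 2"
      unfolding mj by (simp add: sum_subtractf)
    also have "\<dots> = 0" using twirl_sum[OF Ac trA psic[OF i] _ d] psi[OF i] by simp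
    finally have "(\<Sum>j = 0..3. m j) = 0" .
    moreover have "{0..3::nat} = {0,1,2,3}" by auto
    ultimately have s0: "m 0 + m 1 + m 2 + m 3 = 0" by (simp add: add.assoc)
    have m0: "m 0 = mval n (kron W1 W') (\<psi> i)" unfolding m_def p0[OF psic[OF i]] ..
    have "(1/4) * (loss (m 0 * Y i) + loss (m 1 * Y i) + loss (m 2 * Y i) + loss (m 3 * Y i))
       \<ge> (loss ((1/3) * \<bar>m 0\<bar>) + loss (- (1/3) * \<bar>m 0\<bar>)) / 2"
      by (rule loss_ineq[OF l_convex s0 Y[OF i]])
    moreover have "(\<Sum>j = 0..3. f i j) = loss (m 0 * Y i) + loss (m 1 * Y i) + loss (m 2 * Y i) + loss (m 3 * Y i)"
      using \<open>{0..3::nat} = {0,1,2,3}\<close> by (simp add: f_def m_def d_def add.assoc)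
    ultimately show ?thesis using m0 by simp
  qed
  have P2: "(1 / real N) * (\<Sum>i = 1..N. (1/4) * (\<Sum>j = 0..3. f i j)) \<ge> (1 / real N) * (\<Sum>i = 1..N.
                (loss ((1/3) * \<bar>mval n (kron W1 W') (\<psi> i)\<bar>) + loss (- (1/3) * \<bar>mval n (kron W1 W') (\<psi> i)\<bar>)) / 2)"
    by (intro mult_left_mono sum_mono part2) auto
  have R: "Rhat loss n (kron W1 W') N \<psi> Y = (1 / real N) * (\<Sum>i = 1..N. f i 0)"
    unfolding Rhat_def using f0 by simp
  have Ph: "Phat loss n (kron W1 W') N \<psi> Y = (1 / real N) * (\<Sum>i = 1..N. (1/4) * (\<Sum>j = 0..3. f i j))"
    unfolding Phat_def f_def ..
  have RV: "Rhat loss n (kron W1 W') N (\<lambda>i. kron (pauli (C i \<omega>)) (Vt i \<omega>) *\<^sub>v \<psi> i) Y = (1 / real N) * (\<Sum>i = 1..N. g i \<omega>)" for \<omega>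
    unfolding Rhat_def g_def ..
  have TL: "tensor_list (U # Us) = kron U (tensor_list Us)" for U Us by (simp add: tensor_list_def)
  show ?thesis
    unfolding Let_def Weq TL Vt_def[symmetric] RV R Ph using part1 P2 by simp
qed

end
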